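(* Let $n\ge 3$ and let $(e_1,\dots,e_n)$ be a basis of unit vectors of an $n$-dimensional real inner product space $V$. Then the following are equivalent: (a) For every $1\le k\le n-1$ and every $v\in T_{n-k}$, $P_kv=M_kv$. (b) For every $1\le k\le n-1$, the vector $P_ke_{k+1}$ is parallel to $e_k$ (i.e. a scalar multiple of $e_k$). (c) For every $2\le k\le n-1$, the subspaces $M_k'S_{k-1}$ and $M_k'T_{n-k}$ are orthogonal. (d) For every $1\le k\le n-1$ and every $v\in S_k$, $Q_{n-k}v=M_{k+1}v$. (e) For every $1\le k\le n-1$, the vector $Q_{n-k}e_k$ is parallel to $e_{k+1}$.
   Context: For $k=0,\dots,n$, $S_k=\mathrm{span}\{e_1,\dots,e_k\}$ and $T_k=\mathrm{span}\{e_{n-k+1},\dots,e_n\}$ (so $T_{n-k}=\mathrm{span}\{e_{k+1},\dots,e_n\}$, and $S_0=T_0=\{0\}$). $P_k$ and $Q_k$ denote the orthogonal projections onto $S_k$ and $T_k$ respectively. $M_k$ denotes the orthogonal projection onto the line spanned by $e_k$ (which equals $S_k\cap T_{n-k+1}$), and $M_k'=I-M_k$. *)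

theory Defs
  imports "HOL-Analysis.Analysis"
begin

definition orth_proj :: "'a::euclidean_space set \<Rightarrow> 'a \<Rightarrow> 'a" where
  "orth_proj U v = (THE w. w \<in> U \<and> (\<forall>u\<in>U. orthogonal (v - w) u))"

definition Ssp :: "(nat \<Rightarrow> 'a::euclidean_space) \<Rightarrow> nat \<Rightarrow> 'a set" where
  "Ssp e k = span (e ` {1..k})"

definition Tsp :: "(nat \<Rightarrow> 'a::euclidean_space) \<Rightarrow> nat \<Rightarrow> nat \<Rightarrow> 'a set" where
  "Tsp e n k = span (e ` {n - k + 1..n})"

definition Pk :: "(nat \<Rightarrow> 'a::euclidean_space) \<Rightarrow> nat \<Rightarrow> 'a \<Rightarrow> 'a" where
  "Pk e k = orth_proj (Ssp e k)"

definition Qk :: "(nat \<Rightarrow> 'a::euclidean_space) \<Rightarrow> nat \<Rightarrow> nat \<Rightarrow> 'a \<Rightarrow> 'a" where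
  "Qk e n k = orth_proj (Tsp e n k)"

definition Mk :: "(nat \<Rightarrow> 'a::euclidean_space) \<Rightarrow> nat \<Rightarrow> 'a \<Rightarrow> 'a" where
  "Mk e k = orth_proj (span {e k})"

definition Mk' :: "(nat \<Rightarrow> 'a::euclidean_space) \<Rightarrow> nat \<Rightarrow> 'a \<Rightarrow> 'a" where
  "Mk' e k v = v - Mk e k v"

end

theory Submission
  imports Defs
begin


lemma proj_iff:
  fixes S :: "'a::euclidean_space set"
  shows "orth_proj (span S) v = w \<longleftrightarrow> w \<in> span S \<and> (\<forall>u\<in>S. (v - w) \<bullet> u = 0)"
proof -
  have uniq: "w1 = w2" if "w1 \<in> span S" "\<forall>u\<in>span S. orthogonal (v - w1) u"
     "w2 \<in> span S" "\<forall>u\<in>span S. orthogonal (v - w2) u" for w1 w2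
  proof -
    have d: "w1 - w2 \<in> span S" using that by (simp add: span_diff)
    have "(v - w2) \<bullet> (w1 - w2) = 0" "(v - w1) \<bullet> (w1 - w2) = 0"
      using that d by (auto simp: orthogonal_def)
    then have "(w1 - w2) \<bullet> (w1 - w2) = 0" by (simp add: inner_diff_left)
    then show ?thesis by simp
  qed
  obtain y z where y: "y \<in> span S" and z: "\<And>w. w \<in> span S \<Longrightarrow> orthogonal z w" and vz: "v = y + z"
    using orthogonal_subspace_decomp_exists by blast
  have ex: "y \<in> span S \<and> (\<forall>u\<in>span S. orthogonal (v - y) u)" using y z vz by simp
  have P: "orth_proj (span S) v = y"
    unfolding orth_proj_def using ex uniq by (intro the_equality) blast+
  have sp: "(\<forall>u\<in>span S. orthogonal (v - w) u) \<longleftrightarrow> (\<forall>u\<in>S. (v - w) \<bullet> u = 0)" for w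
    by (metis orthogonal_def orthogonal_to_span span_base)
  show ?thesis
    using P ex uniq sp by metis
qed

lemma Mk_eq:
  assumes "norm (e k) = 1"
  shows "Mk e k v = (v \<bullet> e k) *\<^sub>R e k"
proof -
  have "e k \<bullet> e k = 1" using assms norm_eq_1 by blast
  then show ?thesis unfolding Mk_def
    by (subst proj_iff) (simp add: span_base span_mul inner_diff_left)
qed

lemma bil_span:
  fixes a b :: "'a::euclidean_space"
  assumes "\<forall>x\<in>X. \<forall>y\<in>Y. x \<bullet> y = (x \<bullet> a) * (y \<bullet> b)" "x \<in> span X" "y \<in> span Y"
  shows "x \<bullet> y = (x \<bullet> a) * (y \<bullet> b)"
proof -
  have sub1: "subspace {y. x \<bullet> y = (x \<bullet> a) * (y \<bullet> b)}" for x
    by (auto simp: subspace_def inner_add_right inner_add_left distrib_left)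
  have sub2: "subspace {x. \<forall>y\<in>span Y. x \<bullet> y = (x \<bullet> a) * (y \<bullet> b)}"
    by (auto simp: subspace_def inner_add_right inner_add_left distrib_right)
  have "\<forall>y\<in>span Y. x' \<bullet> y = (x' \<bullet> a) * (y \<bullet> b)" if "x' \<in> X" for x'
  proof
    fix y assume "y \<in> span Y"
    then show "x' \<bullet> y = (x' \<bullet> a) * (y \<bullet> b)"
      by (rule span_induct) (use assms(1) that sub1 in auto)
  qed
  then have "x \<in> {x. \<forall>y\<in>span Y. x \<bullet> y = (x \<bullet> a) * (y \<bullet> b)}"
    using span_induct[OF assms(2), of "\<lambda>x. x \<in> {x. \<forall>y\<in>span Y. x \<bullet> y = (x \<bullet> a) * (y \<bullet> b)}"] sub2 by auto
  then show ?thesis using assms(3) by blast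
qed


lemma Tsp_eq: "k \<le> n \<Longrightarrow> Tsp e n (n - k) = span (e ` {k+1..n})"
  unfolding Tsp_def by (simp add: Suc_diff_le)

lemma unit_inner: "norm (x::'a::euclidean_space) = 1 \<Longrightarrow> x \<bullet> x = 1"
  using norm_eq_1 by blast

lemma P_char:
  assumes "norm (e k) = 1" "1 \<le> k"
  shows "Pk e k v = Mk e k v \<longleftrightarrow> (\<forall>i\<in>{1..k}. v \<bullet> e i = (v \<bullet> e k) * (e i \<bullet> e k))"
proof -
  have m: "(v \<bullet> e k) *\<^sub>R e k \<in> span (e ` {1..k})"
    using assms by (intro span_mul span_base) auto
  have pt: "((v - c *\<^sub>R e k) \<bullet> e i = 0) = (v \<bullet> e i = c * (e i \<bullet> e k))" for i c
    by (simp add: inner_diff_left inner_commute[of "e k" "e i"])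
  show ?thesis
    unfolding Pk_def Ssp_def Mk_eq[of e k, OF assms(1)] proj_iff
    using m by (simp add: pt)
qed

lemma PB_char:
  assumes "norm (e k) = 1" "1 \<le> k"
  shows "(\<exists>c::real. Pk e k (e (k+1)) = c *\<^sub>R e k) \<longleftrightarrow> (\<forall>i\<in>{1..k}. e (k+1) \<bullet> e i = (e (k+1) \<bullet> e k) * (e k \<bullet> e i))"
proof -
  have kk: "e k \<bullet> e k = 1" using unit_inner assms by blast
  have m: "c *\<^sub>R e k \<in> span (e ` {1..k})" for c
    using assms by (intro span_mul span_base) auto
  have H: "Pk e k (e (k+1)) = c *\<^sub>R e k \<longleftrightarrow> (\<forall>i\<in>{1..k}. e (k+1) \<bullet> e i = c * (e k \<bullet> e i))" for c
    unfolding Pk_def Ssp_def proj_iff using m by (auto simp: inner_diff_left)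
  have kin: "k \<in> {1..k}" using assms by simp
  show ?thesis
  proof
    assume "\<exists>c. Pk e k (e (k+1)) = c *\<^sub>R e k"
    then obtain c where "\<forall>i\<in>{1..k}. e (k+1) \<bullet> e i = c * (e k \<bullet> e i)" using H by blast
    moreover then have "e (k+1) \<bullet> e k = c" using kin kk by force
    ultimately show "\<forall>i\<in>{1..k}. e (k+1) \<bullet> e i = (e (k+1) \<bullet> e k) * (e k \<bullet> e i)" by simp
  next
    assume "\<forall>i\<in>{1..k}. e (k+1) \<bullet> e i = (e (k+1) \<bullet> e k) * (e k \<bullet> e i)"
    then show "\<exists>c. Pk e k (e (k+1)) = c *\<^sub>R e k" using H by blast
  qed
qed

lemma Q_char:
  assumes "norm (e (k+1)) = 1" "k + 1 \<le> n"
  shows "Qk e n (n - k) v = Mk e (k+1) v \<longleftrightarrow> (\<forall>j\<in>{k+1..n}. v \<bullet> e j = (v \<bullet> e (k+1)) * (e j \<bullet> e (k+1)))"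
proof -
  have m: "(v \<bullet> e (k+1)) *\<^sub>R e (k+1) \<in> span (e ` {k+1..n})"
    using assms by (intro span_mul span_base) auto
  have pt: "((v - c *\<^sub>R e (Suc k)) \<bullet> e i = 0) = (v \<bullet> e i = c * (e i \<bullet> e (Suc k)))" for i c
    by (simp add: inner_diff_left inner_commute[of "e (Suc k)" "e i"])
  show ?thesis
    unfolding Qk_def Tsp_eq[of k n e, OF order_trans[OF le_add1 assms(2)]] Mk_eq[of e "k+1", OF assms(1)] proj_iff
    using m by (simp add: pt)
qed

lemma QE_char:
  assumes "norm (e (k+1)) = 1" "k + 1 \<le> n"
  shows "(\<exists>c::real. Qk e n (n - k) (e k) = c *\<^sub>R e (k+1)) \<longleftrightarrow> (\<forall>j\<in>{k+1..n}. e k \<bullet> e j = (e k \<bullet> e (k+1)) * (e (k+1) \<bullet> e j))"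
proof -
  have kk: "e (k+1) \<bullet> e (k+1) = 1" using unit_inner assms by blast
  have m: "c *\<^sub>R e (k+1) \<in> span (e ` {k+1..n})" for c
    using assms by (intro span_mul span_base) auto
  have H: "Qk e n (n - k) (e k) = c *\<^sub>R e (k+1) \<longleftrightarrow> (\<forall>j\<in>{k+1..n}. e k \<bullet> e j = c * (e (k+1) \<bullet> e j))" for c
    unfolding Qk_def Tsp_eq[of k n e, OF order_trans[OF le_add1 assms(2)]] proj_iff using m by (auto simp: inner_diff_left)
  have kin: "k+1 \<in> {k+1..n}" using assms by simp
  show ?thesis
  proof
    assume "\<exists>c. Qk e n (n - k) (e k) = c *\<^sub>R e (k+1)"
    then obtain c where "\<forall>j\<in>{k+1..n}. e k \<bullet> e j = c * (e (k+1) \<bullet> e j)" using H by blast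
    moreover then have "e k \<bullet> e (k+1) = c" using kin kk by force
    ultimately show "\<forall>j\<in>{k+1..n}. e k \<bullet> e j = (e k \<bullet> e (k+1)) * (e (k+1) \<bullet> e j)" by simp
  next
    assume "\<forall>j\<in>{k+1..n}. e k \<bullet> e j = (e k \<bullet> e (k+1)) * (e (k+1) \<bullet> e j)"
    then show "\<exists>c. Qk e n (n - k) (e k) = c *\<^sub>R e (k+1)" using H by blast
  qed
qed

lemma Mk'_inner:
  assumes "norm (e k) = 1"
  shows "Mk' e k x \<bullet> Mk' e k y = x \<bullet> y - (x \<bullet> e k) * (y \<bullet> e k)"
  using unit_inner[OF assms] unfolding Mk'_def Mk_eq[of e k, OF assms]
  by (simp add: inner_diff_left inner_diff_right algebra_simps inner_commute)



definition GG :: "(nat \<Rightarrow> nat \<Rightarrow> real) \<Rightarrow> nat \<Rightarrow> bool" where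
  "GG g n = (\<forall>i k j. 1 \<le> i \<and> i < k \<and> k < j \<and> j \<le> n \<longrightarrow> g i j = g i k * g k j)"

lemma B_G:
  assumes sym: "\<And>i j. g i j = g j i" and diag: "\<And>k. k \<in> {1..n} \<Longrightarrow> g k k = 1"
  shows "(\<forall>k\<in>{1..n-1}. \<forall>i\<in>{1..k}. g (k+1) i = g (k+1) k * g k i) \<longleftrightarrow> GG g n"
proof
  assume B0: "\<forall>k\<in>{1..n-1}. \<forall>i\<in>{1..k}. g (k+1) i = g (k+1) k * g k i"
  have B: "g (k+1) i = g (k+1) k * g k i" if "1 \<le> i" "i \<le> k" "k + 1 \<le> n" for k i
    using B0[rule_format, of k i] that by simp
  have c: "k < j \<longrightarrow> j \<le> n \<longrightarrow> g j i = g j k * g k i" if "1 \<le> i" "i \<le> k" for i k j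
  proof (induct j)
    case 0 then show ?case by simp
  next
    case (Suc j)
    show ?case
    proof (intro impI)
      assume a: "k < Suc j" "Suc j \<le> n"
      show "g (Suc j) i = g (Suc j) k * g k i"
      proof (cases "j = k")
        case True then show ?thesis using B[of i k] a that by simp
      next
        case False
        then have kj: "k < j" using a by simp
        then have "g j i = g j k * g k i" using Suc a by simp
        moreover have "g (j+1) i = g (j+1) j * g j i" using B[of i j] a that kj by simp
        moreover have "g (j+1) k = g (j+1) j * g j k" using B[of k j] a that kj by simp
        ultimately show ?thesis by simp
      qed
    qed
  qed
  show "GG g n" unfolding GG_def
  proof (intro allI impI)
    fix i k j assume a: "1 \<le> i \<and> i < k \<and> k < j \<and> j \<le> n"
    then have "g j i = g j k * g k i" using c[of i k j] by simp
    then show "g i j = g i k * g k j" by (simp add: sym[of i j] sym[of i k] sym[of k j] mult.commute)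
  qed
next
  assume G: "GG g n"
  show "\<forall>k\<in>{1..n-1}. \<forall>i\<in>{1..k}. g (k+1) i = g (k+1) k * g k i"
  proof (intro ballI)
    fix k i assume k: "k \<in> {1..n-1}" and i: "i \<in> {1..k}"
    show "g (k+1) i = g (k+1) k * g k i"
    proof (cases "i = k")
      case True
      have "g k k = 1" using diag[of k] k by auto
      then show ?thesis using True by simp
    next
      case False
      then have "g i (k+1) = g i k * g k (k+1)" using G[unfolded GG_def, rule_format, of i k "k+1"] k i by fastforce
      then show ?thesis by (metis sym mult.commute)
    qed
  qed
qed

lemma E_G:
  assumes sym: "\<And>i j. g i j = g j i" and diag: "\<And>k. k \<in> {1..n} \<Longrightarrow> g k k = 1"
  shows "(\<forall>k\<in>{1..n-1}. \<forall>j\<in>{k+1..n}. g k j = g k (k+1) * g (k+1) j) \<longleftrightarrow> GG g n"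
proof
  assume E0: "\<forall>k\<in>{1..n-1}. \<forall>j\<in>{k+1..n}. g k j = g k (k+1) * g (k+1) j"
  have E: "g k j = g k (k+1) * g (k+1) j" if "1 \<le> k" "k < j" "j \<le> n" for k j
    using E0[rule_format, of k j] that by simp
  have c: "\<forall>i. 1 \<le> i \<longrightarrow> i + d = k \<longrightarrow> g i j = g i k * g k j" if "k < j" "j \<le> n" for k j d
  proof (induct d)
    case 0 then show ?case using diag that by simp
  next
    case (Suc d)
    show ?case
    proof (intro allI impI)
      fix i assume a: "1 \<le> i" "i + Suc d = k"
      have "g (i+1) j = g (i+1) k * g k j" using Suc a by simp
      moreover have "g i j = g i (i+1) * g (i+1) j" using E[of i j] a that by simp
      moreover have "g i k = g i (i+1) * g (i+1) k" using E[of i k] a that by simp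
      ultimately show "g i j = g i k * g k j" by simp
    qed
  qed
  show "GG g n" unfolding GG_def
  proof (intro allI impI)
    fix i k j assume "1 \<le> i \<and> i < k \<and> k < j \<and> j \<le> n"
    then show "g i j = g i k * g k j" using c[of k j "k - i"] by simp
  qed
next
  assume G: "GG g n"
  show "\<forall>k\<in>{1..n-1}. \<forall>j\<in>{k+1..n}. g k j = g k (k+1) * g (k+1) j"
  proof (intro ballI)
    fix k j assume k: "k \<in> {1..n-1}" and j: "j \<in> {k+1..n}"
    show "g k j = g k (k+1) * g (k+1) j"
    proof (cases "j = k+1")
      case True
      have "g (k+1) (k+1) = 1" using diag[of "k+1"] k by auto
      then show ?thesis using True by simp
    next
      case False
      then show ?thesis using G[unfolded GG_def, rule_format, of k "k+1" j] k j by simp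
    qed
  qed
qed


lemma A_G:
  assumes sym: "\<And>i j. g i j = g j i" and diag: "\<And>k. k \<in> {1..n} \<Longrightarrow> g k k = 1"
  shows "(\<forall>k\<in>{1..n-1}. \<forall>j\<in>{k+1..n}. \<forall>i\<in>{1..k}. g j i = g j k * g i k) \<longleftrightarrow> GG g n"
proof
  assume H: "\<forall>k\<in>{1..n-1}. \<forall>j\<in>{k+1..n}. \<forall>i\<in>{1..k}. g j i = g j k * g i k"
  show "GG g n" unfolding GG_def
  proof (intro allI impI)
    fix i k j assume a: "1 \<le> i \<and> i < k \<and> k < j \<and> j \<le> n"
    moreover have "k \<le> n - 1" using a by arith
    ultimately have "g j i = g j k * g i k" using H[rule_format, of k j i] by simp
    then show "g i j = g i k * g k j" by (metis sym mult.commute)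
  qed
next
  assume G: "GG g n"
  show "\<forall>k\<in>{1..n-1}. \<forall>j\<in>{k+1..n}. \<forall>i\<in>{1..k}. g j i = g j k * g i k"
  proof (intro ballI)
    fix k j i assume k: "k \<in> {1..n-1}" and j: "j \<in> {k+1..n}" and i: "i \<in> {1..k}"
    show "g j i = g j k * g i k"
    proof (cases "i = k")
      case True
      have "g k k = 1" using diag[of k] k by auto
      then show ?thesis using True by simp
    next
      case False
      then have "g i j = g i k * g k j" using G[unfolded GG_def, rule_format, of i k j] k i j by fastforce
      then show ?thesis by (metis sym mult.commute)
    qed
  qed
qed

lemma C_G:
  assumes sym: "\<And>i j. g i j = g j i"
  shows "(\<forall>k\<in>{2..n-1}. \<forall>i\<in>{1..k-1}. \<forall>j\<in>{k+1..n}. g i j = g i k * g j k) \<longleftrightarrow> GG g n"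
proof
  assume H: "\<forall>k\<in>{2..n-1}. \<forall>i\<in>{1..k-1}. \<forall>j\<in>{k+1..n}. g i j = g i k * g j k"
  show "GG g n" unfolding GG_def
  proof (intro allI impI)
    fix i k j assume a: "1 \<le> i \<and> i < k \<and> k < j \<and> j \<le> n"
    moreover have "k \<le> n - 1" "i \<le> k - 1" using a by arith+
    ultimately have "g i j = g i k * g j k" using H[rule_format, of k i j] by simp
    then show "g i j = g i k * g k j" by (metis sym)
  qed
next
  assume G: "GG g n"
  show "\<forall>k\<in>{2..n-1}. \<forall>i\<in>{1..k-1}. \<forall>j\<in>{k+1..n}. g i j = g i k * g j k"
  proof (intro ballI)
    fix k i j assume k: "k \<in> {2..n-1}" and i: "i \<in> {1..k-1}" and j: "j \<in> {k+1..n}"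
    have "g i j = g i k * g k j" using G[unfolded GG_def, rule_format, of i k j] k i j by fastforce
    then show "g i j = g i k * g j k" by (metis sym)
  qed
qed

lemma D_G:
  assumes sym: "\<And>i j. g i j = g j i" and diag: "\<And>k. k \<in> {1..n} \<Longrightarrow> g k k = 1"
  shows "(\<forall>k\<in>{1..n-1}. \<forall>i\<in>{1..k}. \<forall>j\<in>{k+1..n}. g i j = g i (k+1) * g j (k+1)) \<longleftrightarrow> GG g n"
proof
  assume H: "\<forall>k\<in>{1..n-1}. \<forall>i\<in>{1..k}. \<forall>j\<in>{k+1..n}. g i j = g i (k+1) * g j (k+1)"
  show "GG g n" unfolding GG_def
  proof (intro allI impI)
    fix i k j assume a: "1 \<le> i \<and> i < k \<and> k < j \<and> j \<le> n"
    moreover have "k - 1 \<le> n - 1" "i \<le> k - 1" "1 \<le> k - 1" "k - 1 + 1 = k" using a by arith+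
    ultimately have "g i j = g i (k-1+1) * g j (k-1+1)" using H[rule_format, of "k-1" i j] by simp
    then have "g i j = g i k * g j k" using a by simp
    then show "g i j = g i k * g k j" by (metis sym)
  qed
next
  assume G: "GG g n"
  show "\<forall>k\<in>{1..n-1}. \<forall>i\<in>{1..k}. \<forall>j\<in>{k+1..n}. g i j = g i (k+1) * g j (k+1)"
  proof (intro ballI)
    fix k i j assume k: "k \<in> {1..n-1}" and i: "i \<in> {1..k}" and j: "j \<in> {k+1..n}"
    show "g i j = g i (k+1) * g j (k+1)"
    proof (cases "j = k+1")
      case True
      have "g (k+1) (k+1) = 1" using diag[of "k+1"] k by auto
      then show ?thesis using True by simp
    next
      case False
      then have "g i j = g i (k+1) * g (k+1) j" using G[unfolded GG_def, rule_format, of i "k+1" j] k i j by fastforce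
      then show ?thesis by (metis sym)
    qed
  qed
qed


lemma A_k:
  assumes "norm (e k) = 1" "1 \<le> k" "k \<le> n"
  shows "(\<forall>v\<in>Tsp e n (n - k). Pk e k v = Mk e k v) \<longleftrightarrow>
         (\<forall>j\<in>{k+1..n}. \<forall>i\<in>{1..k}. e j \<bullet> e i = (e j \<bullet> e k) * (e i \<bullet> e k))"
  unfolding Tsp_eq[OF assms(3)] P_char[of e k, OF assms(1,2)]
proof
  assume H: "\<forall>v\<in>span (e ` {k + 1..n}). \<forall>i\<in>{1..k}. v \<bullet> e i = v \<bullet> e k * (e i \<bullet> e k)"
  show "\<forall>j\<in>{k+1..n}. \<forall>i\<in>{1..k}. e j \<bullet> e i = (e j \<bullet> e k) * (e i \<bullet> e k)"
    using H span_base by blast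
next
  assume H: "\<forall>j\<in>{k+1..n}. \<forall>i\<in>{1..k}. e j \<bullet> e i = (e j \<bullet> e k) * (e i \<bullet> e k)"
  show "\<forall>v\<in>span (e ` {k + 1..n}). \<forall>i\<in>{1..k}. v \<bullet> e i = v \<bullet> e k * (e i \<bullet> e k)"
  proof (intro ballI)
    fix v i assume v: "v \<in> span (e ` {k + 1..n})" and i: "i \<in> {1..k}"
    show "v \<bullet> e i = v \<bullet> e k * (e i \<bullet> e k)"
    proof (rule bil_span[of "e ` {k+1..n}" "e ` {1..k}"])
      show "\<forall>x\<in>e ` {k+1..n}. \<forall>y\<in>e ` {1..k}. x \<bullet> y = x \<bullet> e k * (y \<bullet> e k)"
      proof (intro ballI)
        fix x y assume "x \<in> e ` {k+1..n}" "y \<in> e ` {1..k}"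
        then obtain j i where "x = e j" "j \<in> {k+1..n}" "y = e i" "i \<in> {1..k}" by blast
        then show "x \<bullet> y = x \<bullet> e k * (y \<bullet> e k)" using H[rule_format, of j i] by simp
      qed
      show "v \<in> span (e ` {k + 1..n})" by (rule v)
      show "e i \<in> span (e ` {1..k})" using i by (intro span_base) simp
    qed
  qed
qed

lemma C_k:
  assumes "norm (e k) = 1" "2 \<le> k" "k \<le> n"
  shows "(\<forall>x\<in>Ssp e (k - 1). \<forall>y\<in>Tsp e n (n - k). orthogonal (Mk' e k x) (Mk' e k y)) \<longleftrightarrow>
         (\<forall>i\<in>{1..k-1}. \<forall>j\<in>{k+1..n}. e i \<bullet> e j = (e i \<bullet> e k) * (e j \<bullet> e k))"
  unfolding Tsp_eq[OF assms(3)] Ssp_def orthogonal_def Mk'_inner[of e k, OF assms(1)] right_minus_eq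
proof
  assume H: "\<forall>x\<in>span (e ` {1..k - 1}). \<forall>y\<in>span (e ` {k + 1..n}). x \<bullet> y = x \<bullet> e k * (y \<bullet> e k)"
  show "\<forall>i\<in>{1..k-1}. \<forall>j\<in>{k+1..n}. e i \<bullet> e j = (e i \<bullet> e k) * (e j \<bullet> e k)"
    using H span_base by blast
next
  assume H: "\<forall>i\<in>{1..k-1}. \<forall>j\<in>{k+1..n}. e i \<bullet> e j = (e i \<bullet> e k) * (e j \<bullet> e k)"
  show "\<forall>x\<in>span (e ` {1..k - 1}). \<forall>y\<in>span (e ` {k + 1..n}). x \<bullet> y = x \<bullet> e k * (y \<bullet> e k)"
  proof (intro ballI)
    fix x y assume x: "x \<in> span (e ` {1..k - 1})" and y: "y \<in> span (e ` {k + 1..n})"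
    show "x \<bullet> y = x \<bullet> e k * (y \<bullet> e k)"
    proof (rule bil_span[of "e ` {1..k-1}" "e ` {k+1..n}"])
      show "\<forall>x\<in>e ` {1..k-1}. \<forall>y\<in>e ` {k+1..n}. x \<bullet> y = x \<bullet> e k * (y \<bullet> e k)"
      proof (intro ballI)
        fix x y assume "x \<in> e ` {1..k-1}" "y \<in> e ` {k+1..n}"
        then obtain i j where "x = e i" "i \<in> {1..k-1}" "y = e j" "j \<in> {k+1..n}" by blast
        then show "x \<bullet> y = x \<bullet> e k * (y \<bullet> e k)" using H[rule_format, of i j] by simp
      qed
      show "x \<in> span (e ` {1..k-1})" by (rule x)
      show "y \<in> span (e ` {k+1..n})" by (rule y)
    qed
  qed
qed

lemma D_k:
  assumes "norm (e (k+1)) = 1" "k + 1 \<le> n"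
  shows "(\<forall>v\<in>Ssp e k. Qk e n (n - k) v = Mk e (k+1) v) \<longleftrightarrow>
         (\<forall>i\<in>{1..k}. \<forall>j\<in>{k+1..n}. e i \<bullet> e j = (e i \<bullet> e (k+1)) * (e j \<bullet> e (k+1)))"
  unfolding Ssp_def Q_char[of e k, OF assms]
proof
  assume H: "\<forall>v\<in>span (e ` {1..k}). \<forall>j\<in>{k + 1..n}. v \<bullet> e j = v \<bullet> e (k + 1) * (e j \<bullet> e (k + 1))"
  show "\<forall>i\<in>{1..k}. \<forall>j\<in>{k+1..n}. e i \<bullet> e j = (e i \<bullet> e (k+1)) * (e j \<bullet> e (k+1))"
    using H span_base by blast
next
  assume H: "\<forall>i\<in>{1..k}. \<forall>j\<in>{k+1..n}. e i \<bullet> e j = (e i \<bullet> e (k+1)) * (e j \<bullet> e (k+1))"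
  show "\<forall>v\<in>span (e ` {1..k}). \<forall>j\<in>{k + 1..n}. v \<bullet> e j = v \<bullet> e (k + 1) * (e j \<bullet> e (k + 1))"
  proof (intro ballI)
    fix v j assume v: "v \<in> span (e ` {1..k})" and j: "j \<in> {k + 1..n}"
    show "v \<bullet> e j = v \<bullet> e (k + 1) * (e j \<bullet> e (k + 1))"
    proof (rule bil_span[of "e ` {1..k}" "e ` {k+1..n}"])
      show "\<forall>x\<in>e ` {1..k}. \<forall>y\<in>e ` {k+1..n}. x \<bullet> y = x \<bullet> e (k+1) * (y \<bullet> e (k+1))"
      proof (intro ballI)
        fix x y assume "x \<in> e ` {1..k}" "y \<in> e ` {k+1..n}"
        then obtain i j' where "x = e i" "i \<in> {1..k}" "y = e j'" "j' \<in> {k+1..n}" by blast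
        then show "x \<bullet> y = x \<bullet> e (k+1) * (y \<bullet> e (k+1))" using H[rule_format, of i j'] by simp
      qed
      show "v \<in> span (e ` {1..k})" by (rule v)
      show "e j \<in> span (e ` {k+1..n})" using j by (intro span_base) simp
    qed
  qed
qed

theorem proposition3:
  fixes e :: "nat \<Rightarrow> 'a::euclidean_space" and n :: nat
  assumes "n \<ge> 3"
    and "DIM('a) = n"
    and "inj_on e {1..n}"
    and "independent (e ` {1..n})"
    and "span (e ` {1..n}) = UNIV"
    and "\<And>i. i \<in> {1..n} \<Longrightarrow> norm (e i) = 1"
  defines "A \<equiv> (\<forall>k\<in>{1..n-1}. \<forall>v\<in>Tsp e n (n - k). Pk e k v = Mk e k v)"
    and "B \<equiv> (\<forall>k\<in>{1..n-1}. \<exists>c::real. Pk e k (e (k+1)) = c *\<^sub>R e k)"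
    and "C \<equiv> (\<forall>k\<in>{2..n-1}. \<forall>x\<in>Ssp e (k - 1). \<forall>y\<in>Tsp e n (n - k).
               orthogonal (Mk' e k x) (Mk' e k y))"
    and "D \<equiv> (\<forall>k\<in>{1..n-1}. \<forall>v\<in>Ssp e k. Qk e n (n - k) v = Mk e (k+1) v)"
    and "E \<equiv> (\<forall>k\<in>{1..n-1}. \<exists>c::real. Qk e n (n - k) (e k) = c *\<^sub>R e (k+1))"
  shows "(A \<longleftrightarrow> B) \<and> (A \<longleftrightarrow> C) \<and> (A \<longleftrightarrow> D) \<and> (A \<longleftrightarrow> E)"
proof -
  define g where "g = (\<lambda>i j. e i \<bullet> e j)"
  have sym: "\<And>i j. g i j = g j i" unfolding g_def by (simp add: inner_commute)
  have nrm: "\<And>k. k \<in> {1..n} \<Longrightarrow> norm (e k) = 1" using assms(6) by blast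
  have diag: "\<And>k. k \<in> {1..n} \<Longrightarrow> g k k = 1" unfolding g_def using nrm unit_inner by blast
  have "A \<longleftrightarrow> (\<forall>k\<in>{1..n-1}. \<forall>j\<in>{k+1..n}. \<forall>i\<in>{1..k}. g j i = g j k * g i k)"
    unfolding A_def g_def by (rule ball_cong[OF refl], rule A_k, rule nrm) auto
  also have "\<dots> \<longleftrightarrow> GG g n" by (rule A_G[OF sym diag])
  finally have A: "A \<longleftrightarrow> GG g n" .
  have "B \<longleftrightarrow> (\<forall>k\<in>{1..n-1}. \<forall>i\<in>{1..k}. g (k+1) i = g (k+1) k * g k i)"
    unfolding B_def g_def by (rule ball_cong[OF refl], rule PB_char, rule nrm) auto
  also have "\<dots> \<longleftrightarrow> GG g n" by (rule B_G[OF sym diag])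
  finally have B: "B \<longleftrightarrow> GG g n" .
  have "C \<longleftrightarrow> (\<forall>k\<in>{2..n-1}. \<forall>i\<in>{1..k-1}. \<forall>j\<in>{k+1..n}. g i j = g i k * g j k)"
    unfolding C_def g_def by (rule ball_cong[OF refl], rule C_k, rule nrm) auto
  also have "\<dots> \<longleftrightarrow> GG g n" by (rule C_G[OF sym])
  finally have C: "C \<longleftrightarrow> GG g n" .
  have "D \<longleftrightarrow> (\<forall>k\<in>{1..n-1}. \<forall>i\<in>{1..k}. \<forall>j\<in>{k+1..n}. g i j = g i (k+1) * g j (k+1))"
    unfolding D_def g_def by (rule ball_cong[OF refl], rule D_k, rule nrm) auto
  also have "\<dots> \<longleftrightarrow> GG g n" by (rule D_G[OF sym diag])
  finally have D: "D \<longleftrightarrow> GG g n" .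
  have "E \<longleftrightarrow> (\<forall>k\<in>{1..n-1}. \<forall>j\<in>{k+1..n}. g k j = g k (k+1) * g (k+1) j)"
    unfolding E_def g_def by (rule ball_cong[OF refl], rule QE_char, rule nrm) auto
  also have "\<dots> \<longleftrightarrow> GG g n" by (rule E_G[OF sym diag])
  finally have E: "E \<longleftrightarrow> GG g n" .
  show ?thesis using A B C D E by blast
qed

end
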